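(* Let $(V,E)$ be a digraph with $V$ countably infinite, $\mu_1,\mu_2$ probability measures on $V$, and $Q$ a finitely decomposable acyclic flow on $(V,E)$ with $\operatorname{div}Q=\mu_1-\mu_2$. Then there exists a coupling $\rho$ between $\mu_1$ and $\mu_2$ such that $\rho(x,y)=0$ whenever there is no directed path from $x$ to $y$ in the digraph $(V,E(Q))$.
   Context: A flow on $(V,E)$ is a map $Q:E\to[0,+\infty)$, with $\operatorname{div}Q(x)=\sum_{y:(x,y)\in E}Q(x,y)-\sum_{y:(y,x)\in E}Q(y,x)$. $E(Q)=\{e\in E:Q(e)>0\}$; $Q$ is acyclic if $(V,E(Q))$ has no directed cycle. For a directed path $\gamma=(x_0,\dots,x_n)$, $Q_\gamma(x,y)=1$ if $(x,y)=(x_i,x_{i+1})$ for some $i$, $0$ otherwise. $Q$ is finitely decomposable if $Q=\sum_nq_nQ_{\gamma_n}$ pointwise for a countable family of finite self-avoiding directed paths $\gamma_n$ and weights $q_n\ge0$ with $\sum_nq_n<\infty$. A coupling is a probability measure on $V\times V$ with marginals $\mu_1,\mu_2$. A path of length zero from $x$ to $x$ is allowed. *)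

theory Defs
  imports "HOL-Probability.Probability"
begin

text \<open>A flow on (V,E): nonnegative, and vanishing off E (flows are maps E \<rightarrow> [0,\<infinity>),
  represented as functions on all pairs that are zero outside E).\<close>
definition is_flow :: "'a set \<Rightarrow> ('a \<times> 'a) set \<Rightarrow> ('a \<times> 'a \<Rightarrow> real) \<Rightarrow> bool" where
  "is_flow V E Q \<longleftrightarrow> (\<forall>e. 0 \<le> Q e) \<and> (\<forall>e. e \<notin> E \<longrightarrow> Q e = 0)"

definition flow_div :: "('a \<times> 'a) set \<Rightarrow> ('a \<times> 'a \<Rightarrow> real) \<Rightarrow> 'a \<Rightarrow> real" where
  "flow_div E Q x =
     (\<Sum>\<^sub>\<infinity> y\<in>{y. (x,y) \<in> E}. Q (x,y)) - (\<Sum>\<^sub>\<infinity> y\<in>{y. (y,x) \<in> E}. Q (y,x))"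

definition flow_support :: "('a \<times> 'a) set \<Rightarrow> ('a \<times> 'a \<Rightarrow> real) \<Rightarrow> ('a \<times> 'a) set" where
  "flow_support E Q = {e \<in> E. Q e > 0}"

definition acyclic_flow :: "('a \<times> 'a) set \<Rightarrow> ('a \<times> 'a \<Rightarrow> real) \<Rightarrow> bool" where
  "acyclic_flow E Q \<longleftrightarrow> acyclic (flow_support E Q)"

definition directed_path :: "'a set \<Rightarrow> ('a \<times> 'a) set \<Rightarrow> 'a list \<Rightarrow> bool" where
  "directed_path V E \<gamma> \<longleftrightarrow> \<gamma> \<noteq> [] \<and> set \<gamma> \<subseteq> V \<and>
     (\<forall>i. Suc i < length \<gamma> \<longrightarrow> (\<gamma> ! i, \<gamma> ! Suc i) \<in> E)"

definition self_avoiding_path :: "'a set \<Rightarrow> ('a \<times> 'a) set \<Rightarrow> 'a list \<Rightarrow> bool" where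
  "self_avoiding_path V E \<gamma> \<longleftrightarrow> directed_path V E \<gamma> \<and> distinct \<gamma>"

definition path_flow :: "'a list \<Rightarrow> 'a \<times> 'a \<Rightarrow> real" where
  "path_flow \<gamma> e = (if \<exists>i. Suc i < length \<gamma> \<and> e = (\<gamma> ! i, \<gamma> ! Suc i) then 1 else 0)"

text \<open>Countable families are indexed by nat (finite families padded with zero weights).\<close>
definition finitely_decomposable :: "'a set \<Rightarrow> ('a \<times> 'a) set \<Rightarrow> ('a \<times> 'a \<Rightarrow> real) \<Rightarrow> bool" where
  "finitely_decomposable V E Q \<longleftrightarrow>
     (\<exists>(\<gamma> :: nat \<Rightarrow> 'a list) (q :: nat \<Rightarrow> real).
        (\<forall>n. self_avoiding_path V E (\<gamma> n)) \<and> (\<forall>n. 0 \<le> q n) \<and> summable q \<and>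
        (\<forall>e. (\<lambda>n. q n * path_flow (\<gamma> n) e) sums Q e))"

definition is_coupling :: "('a \<times> 'a) pmf \<Rightarrow> 'a pmf \<Rightarrow> 'a pmf \<Rightarrow> bool" where
  "is_coupling \<rho> \<mu>1 \<mu>2 \<longleftrightarrow> map_pmf fst \<rho> = \<mu>1 \<and> map_pmf snd \<rho> = \<mu>2"

end

theory Submission
  imports Defs
begin



abbreviation CS where "CS \<equiv> count_space UNIV"

lemma nn_int_restrictV:
  assumes "\<And>i. i \<notin> V \<Longrightarrow> g i = 0"
  shows "(\<integral>\<^sup>+i. g i \<partial>CS) = (\<integral>\<^sup>+i. g i \<partial>count_space V)"
  by (subst nn_integral_count_space_indicator) (auto intro!: nn_integral_cong simp: indicator_def assms)

lemma swapV:
  fixes f :: "'a \<Rightarrow> 'b \<Rightarrow> ennreal"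
  assumes "countable V" "\<And>i x. i \<notin> V \<Longrightarrow> f i x = 0"
  shows "(\<integral>\<^sup>+x. \<integral>\<^sup>+i. f i x \<partial>CS \<partial>CS) = (\<integral>\<^sup>+i. \<integral>\<^sup>+x. f i x \<partial>CS \<partial>CS)"
proof -
  have "(\<integral>\<^sup>+x. \<integral>\<^sup>+i. f i x \<partial>CS \<partial>CS) = (\<integral>\<^sup>+x. \<integral>\<^sup>+i. f i x \<partial>count_space V \<partial>CS)"
    by (intro nn_integral_cong nn_int_restrictV) (simp add: assms)
  also have "\<dots> = (\<integral>\<^sup>+i. \<integral>\<^sup>+x. f i x \<partial>CS \<partial>count_space V)"
    by (rule nn_integral_count_space_nn_integral) (auto simp: assms)
  also have "\<dots> = (\<integral>\<^sup>+i. \<integral>\<^sup>+x. f i x \<partial>CS \<partial>CS)"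
    by (rule nn_int_restrictV[symmetric]) (simp add: assms)
  finally show ?thesis .
qed

lemma point_le_int: "f z \<le> (\<integral>\<^sup>+x. f x \<partial>CS)"
proof -
  have "f z = (\<integral>\<^sup>+x. f x * indicator {z} x \<partial>CS)"
    by (simp add: nn_integral_indicator_singleton)
  also have "\<dots> \<le> (\<integral>\<^sup>+x. f x \<partial>CS)"
    by (intro nn_integral_mono) (auto simp: indicator_def)
  finally show ?thesis .
qed




lemma mult_div_le: "(a::ennreal) * (b / a) \<le> b"
proof (cases "a = 0 \<or> a = top")
  case True then show ?thesis by auto
next
  case False
  then have "a * (b / a) = b" using ennreal_mult_divide_eq[of a b]
    by (simp add: ennreal_times_divide mult.commute)
  then show ?thesis by simp
qed

lemma eq_of_le_int:
  fixes f g :: "'a \<Rightarrow> ennreal"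
  assumes le: "\<And>x. f x \<le> g x" and eq: "(\<integral>\<^sup>+x. f x \<partial>CS) = (\<integral>\<^sup>+x. g x \<partial>CS)"
    and fin: "(\<integral>\<^sup>+x. g x \<partial>CS) \<noteq> top"
  shows "f x = g x"
proof -
  have "(\<integral>\<^sup>+x. g x \<partial>CS) = (\<integral>\<^sup>+x. f x + (g x - f x) \<partial>CS)"
    by (intro nn_integral_cong) (simp add: add_diff_inverse_ennreal le)
  also have "\<dots> = (\<integral>\<^sup>+x. f x \<partial>CS) + (\<integral>\<^sup>+x. (g x - f x) \<partial>CS)"
    by (rule nn_integral_add) auto
  finally have "(\<integral>\<^sup>+x. (g x - f x) \<partial>CS) = 0"
    using eq fin by (metis add.right_neutral ennreal_add_left_cancel infinity_ennreal_def)
  moreover have "g x - f x \<le> (\<integral>\<^sup>+x. (g x - f x) \<partial>CS)" by (rule point_le_int)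
  ultimately have "g x - f x = 0" by simp
  then have "g x \<le> f x" by (simp add: diff_eq_0_iff_ennreal)
  then show ?thesis using le[of x] by simp
qed

primrec Gc :: "('a \<Rightarrow> ennreal) \<Rightarrow> ('a \<Rightarrow> 'a \<Rightarrow> ennreal) \<Rightarrow> nat \<Rightarrow> 'a \<Rightarrow> 'a \<Rightarrow> ennreal" where
  "Gc m1 P 0 z x = m1 z * indicator {z} x"
| "Gc m1 P (Suc k) z y = (\<integral>\<^sup>+x. Gc m1 P k z x * P x y \<partial>CS)"

locale core =
  fixes V :: "'a set" and S :: "('a \<times> 'a) set" and m1 m2 :: "'a \<Rightarrow> ennreal"
    and w :: "nat \<Rightarrow> ennreal" and s t :: "nat \<Rightarrow> 'a"
  assumes cV: "countable V" and m1V: "\<And>x. x \<notin> V \<Longrightarrow> m1 x = 0"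
    and sV: "\<And>n. s n \<in> V" and tV: "\<And>n. t n \<in> V"
    and m1sum: "(\<integral>\<^sup>+x. m1 x \<partial>CS) = 1" and m2sum: "(\<integral>\<^sup>+x. m2 x \<partial>CS) = 1"
    and wfin: "(\<Sum>n. w n) \<noteq> top"
    and bal: "\<And>x. m1 x + (\<Sum>n. w n * indicator {t n} x) = m2 x + (\<Sum>n. w n * indicator {s n} x)"
    and wS: "\<And>n. w n \<noteq> 0 \<Longrightarrow> (s n, t n) \<in> S\<^sup>*"
begin

definition "piw x y = (\<Sum>n. w n * indicator {s n} x * indicator {t n} y)"
definition "nu x = (\<Sum>n. w n * indicator {s n} x)"
definition "nu' x = (\<Sum>n. w n * indicator {t n} x)"
definition "a x = m1 x + nu' x"
definition "P x y = piw x y / a x"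
definition "st y = m2 y / a y"
abbreviation "G \<equiv> Gc m1 P"
definition "H k y = (\<integral>\<^sup>+z. G k z y \<partial>CS)"
definition "m k z = (\<integral>\<^sup>+y. G k z y \<partial>CS)"
definition "gam z y = (\<Sum>k. G k z y) * st y"

lemma pi_col: "(\<integral>\<^sup>+x. piw x y \<partial>CS) = nu' y"
proof -
  have "(\<integral>\<^sup>+x. piw x y \<partial>CS) = (\<Sum>n. \<integral>\<^sup>+x. (w n * indicator {t n} y) * indicator {s n} x \<partial>CS)"
    unfolding piw_def by (subst nn_integral_suminf) (auto simp: ac_simps)
  also have "\<dots> = nu' y" unfolding nu'_def
    by (subst nn_integral_cmult_indicator) auto
  finally show ?thesis .
qed

lemma pi_row: "(\<integral>\<^sup>+y. piw x y \<partial>CS) = nu x"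
proof -
  have "(\<integral>\<^sup>+y. piw x y \<partial>CS) = (\<Sum>n. \<integral>\<^sup>+y. (w n * indicator {s n} x) * indicator {t n} y \<partial>CS)"
    unfolding piw_def by (subst nn_integral_suminf) (auto simp: ac_simps)
  also have "\<dots> = nu x" unfolding nu_def
    by (subst nn_integral_cmult_indicator) auto
  finally show ?thesis .
qed

lemma pi_le_nu: "piw x y \<le> nu x"
  unfolding piw_def nu_def
  by (intro suminf_le) (auto simp: indicator_def)

lemma a_alt: "a x = m2 x + nu x"
  using bal[of x] by (simp add: a_def nu_def nu'_def)

lemma nu_le_a: "nu x \<le> a x" by (simp add: a_alt)

lemma nu'_le: "nu' x \<le> (\<Sum>n. w n)"
  unfolding nu'_def by (intro suminf_le) (auto simp: indicator_def)

lemma m1_le: "m1 x \<le> 1" using point_le_int[of m1 x] m1sum by simp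

lemma a_fin: "a x < top"
proof -
  have "m1 x < top" using m1_le[of x] by (simp add: order_le_less_trans)
  moreover have "nu' x < top" using nu'_le[of x] wfin by (simp add: order_le_less_trans top.not_eq_extremum)
  ultimately show ?thesis by (simp add: a_def ennreal_add_less_top)
qed

lemma aP_le: "a x * P x y \<le> piw x y"
  unfolding P_def by (rule mult_div_le)

lemma pi_zero_off: "y \<notin> V \<Longrightarrow> piw x y = 0"
proof -
  assume "y \<notin> V"
  then have "\<And>n. t n \<noteq> y" using tV by metis
  then have "\<And>n. w n * indicator {s n} x * indicator {t n} y = 0"
    by (simp add: indicator_def) metis
  then show ?thesis unfolding piw_def by (simp only: suminf_zero)
qed

lemma G_off: "z \<notin> V \<or> y \<notin> V \<Longrightarrow> G k z y = 0"
proof (induction k arbitrary: y)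
  case 0
  then show ?case using m1V by (auto simp: indicator_def)
next
  case (Suc k)
  have "\<And>x. G k z x * P x y = 0"
  proof -
    fix x show "G k z x * P x y = 0"
    proof (cases "z \<notin> V")
      case True then show ?thesis using Suc.IH by simp
    next
      case False then have "y \<notin> V" using Suc.prems by simp
      then show ?thesis by (simp add: P_def pi_zero_off)
    qed
  qed
  then have eq0: "\<And>x. G k z x * P x y = 0" .
  show ?case by (simp only: Gc.simps eq0) simp
qed

end


context core begin

lemma H_0: "H 0 y = m1 y"
proof -
  have "H 0 y = (\<integral>\<^sup>+z. m1 y * indicator {y} z \<partial>CS)"
    unfolding H_def by (intro nn_integral_cong) (auto simp: indicator_def)
  then show ?thesis by (simp add: nn_integral_cmult_indicator)
qed

lemma H_Suc: "H (Suc k) y = (\<integral>\<^sup>+x. H k x * P x y \<partial>CS)"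
proof -
  have "H (Suc k) y = (\<integral>\<^sup>+z. \<integral>\<^sup>+x. G k z x * P x y \<partial>CS \<partial>CS)"
    by (simp add: H_def)
  also have "\<dots> = (\<integral>\<^sup>+x. \<integral>\<^sup>+z. G k z x * P x y \<partial>CS \<partial>CS)"
    by (rule swapV[symmetric, OF cV]) (simp add: G_off)
  also have "\<dots> = (\<integral>\<^sup>+x. H k x * P x y \<partial>CS)"
    unfolding H_def by (simp add: nn_integral_multc)
  finally show ?thesis .
qed

lemma O_le: "(\<Sum>k<K. H k y) \<le> a y"
proof (induction K arbitrary: y)
  case 0 then show ?case by simp
next
  case (Suc K)
  have "(\<Sum>k<Suc K. H k y) = H 0 y + (\<Sum>k<K. H (Suc k) y)"
    by (rule sum.lessThan_Suc_shift)
  also have "\<dots> = m1 y + (\<Sum>k<K. \<integral>\<^sup>+x. H k x * P x y \<partial>CS)"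
    by (simp add: H_0 H_Suc)
  also have "(\<Sum>k<K. \<integral>\<^sup>+x. H k x * P x y \<partial>CS) = (\<integral>\<^sup>+x. (\<Sum>k<K. H k x) * P x y \<partial>CS)"
    by (simp add: nn_integral_sum sum_distrib_right)
  also have "\<dots> \<le> (\<integral>\<^sup>+x. a x * P x y \<partial>CS)"
    by (intro nn_integral_mono mult_right_mono Suc.IH) simp
  also have "\<dots> \<le> (\<integral>\<^sup>+x. piw x y \<partial>CS)"
    by (intro nn_integral_mono aP_le)
  also have "\<dots> = nu' y" by (rule pi_col)
  finally show ?case by (simp add: a_def add_left_mono)
qed

lemma Osum_le: "(\<Sum>k. H k y) \<le> a y"
  by (intro suminf_le_const summableI O_le)

lemma H_le: "H k y \<le> a y"
proof -
  have "H k y \<le> (\<Sum>k. H k y)"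
    using sum_le_suminf[of "\<lambda>k. H k y" "{k}"] by simp
  then show ?thesis using Osum_le order_trans by blast
qed

lemma G_le_H: "G k z y \<le> H k y"
  unfolding H_def by (rule point_le_int[of "\<lambda>z. G k z y"])

lemma G_le_a: "G k z y \<le> a y"
  using G_le_H H_le order_trans by blast

lemma m_Suc: "m (Suc k) z = (\<integral>\<^sup>+x. G k z x * (nu x / a x) \<partial>CS)"
proof -
  have "m (Suc k) z = (\<integral>\<^sup>+y. \<integral>\<^sup>+x. G k z x * P x y \<partial>CS \<partial>CS)"
    by (simp add: m_def)
  also have "\<dots> = (\<integral>\<^sup>+x. \<integral>\<^sup>+y. G k z x * P x y \<partial>CS \<partial>CS)"
    by (rule swapV[OF cV]) (simp add: G_off)
  also have "\<dots> = (\<integral>\<^sup>+x. G k z x * (\<integral>\<^sup>+y. P x y \<partial>CS) \<partial>CS)"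
    by (simp add: nn_integral_cmult)
  also have "\<dots> = (\<integral>\<^sup>+x. G k z x * (nu x / a x) \<partial>CS)"
    unfolding P_def by (simp add: nn_integral_divide pi_row)
  finally show ?thesis .
qed

lemma one_step: "(\<integral>\<^sup>+y. G k z y * st y \<partial>CS) + m (Suc k) z = m k z"
proof -
  have pt: "G k z x * st x + G k z x * (nu x / a x) = G k z x" for x
  proof (cases "a x = 0")
    case True
    then have "G k z x = 0" using G_le_a[of k z x] by simp
    then show ?thesis by simp
  next
    case False
    have "st x + nu x / a x = (m2 x + nu x) / a x"
      by (simp add: st_def divide_ennreal_def distrib_right)
    also have "\<dots> = 1" using False a_fin[of x] by (simp add: a_alt[symmetric])
    finally show ?thesis by (simp add: distrib_left[symmetric])
  qed
  have "(\<integral>\<^sup>+y. G k z y * st y \<partial>CS) + m (Suc k) z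
      = (\<integral>\<^sup>+x. G k z x * st x + G k z x * (nu x / a x) \<partial>CS)"
    by (simp add: m_Suc nn_integral_add)
  also have "\<dots> = m k z" unfolding m_def by (simp add: pt)
  finally show ?thesis .
qed

lemma nu_int: "(\<integral>\<^sup>+x. nu x \<partial>CS) = (\<Sum>n. w n)"
  unfolding nu_def by (subst nn_integral_suminf) (auto simp: nn_integral_cmult_indicator)

lemma Tfin: "(\<Sum>k. m (Suc k) z) \<noteq> top"
proof -
  have "(\<Sum>k. m (Suc k) z) \<le> (\<integral>\<^sup>+z'. (\<Sum>k. m (Suc k) z') \<partial>CS)"
    by (rule point_le_int[of "\<lambda>z'. \<Sum>k. m (Suc k) z'"])
  also have "\<dots> = (\<Sum>k. \<integral>\<^sup>+z'. m (Suc k) z' \<partial>CS)"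
    by (simp add: nn_integral_suminf)
  also have "\<dots> = (\<Sum>k. \<integral>\<^sup>+x. H k x * (nu x / a x) \<partial>CS)"
  proof (intro suminf_cong)
    fix k
    have "(\<integral>\<^sup>+z'. m (Suc k) z' \<partial>CS) = (\<integral>\<^sup>+z'. \<integral>\<^sup>+x. G k z' x * (nu x / a x) \<partial>CS \<partial>CS)"
      by (simp add: m_Suc)
    also have "\<dots> = (\<integral>\<^sup>+x. \<integral>\<^sup>+z'. G k z' x * (nu x / a x) \<partial>CS \<partial>CS)"
      by (rule swapV[symmetric, OF cV]) (simp add: G_off)
    also have "\<dots> = (\<integral>\<^sup>+x. H k x * (nu x / a x) \<partial>CS)"
      unfolding H_def by (simp add: nn_integral_multc)
    finally show "(\<integral>\<^sup>+z'. m (Suc k) z' \<partial>CS) = (\<integral>\<^sup>+x. H k x * (nu x / a x) \<partial>CS)" .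
  qed
  also have "\<dots> = (\<integral>\<^sup>+x. (\<Sum>k. H k x * (nu x / a x)) \<partial>CS)"
    by (rule nn_integral_suminf[symmetric]) simp
  also have "\<dots> = (\<integral>\<^sup>+x. (\<Sum>k. H k x) * (nu x / a x) \<partial>CS)"
    by simp
  also have "\<dots> \<le> (\<integral>\<^sup>+x. a x * (nu x / a x) \<partial>CS)"
    by (intro nn_integral_mono mult_right_mono Osum_le) simp
  also have "\<dots> \<le> (\<integral>\<^sup>+x. nu x \<partial>CS)"
    by (intro nn_integral_mono mult_div_le)
  also have "\<dots> = (\<Sum>n. w n)" by (rule nu_int)
  finally show ?thesis using wfin by (metis top.extremum_unique)
qed

end


context core begin

lemma m_0: "m 0 z = m1 z"
proof -
  have "m 0 z = (\<integral>\<^sup>+y. m1 z * indicator {z} y \<partial>CS)"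
    unfolding m_def by (rule nn_integral_cong) simp
  then show ?thesis by (simp add: nn_integral_cmult_indicator)
qed

lemma row: "(\<integral>\<^sup>+y. gam z y \<partial>CS) = m1 z"
proof -
  define c where "c k = (\<integral>\<^sup>+y. G k z y * st y \<partial>CS)" for k
  define T where "T = (\<Sum>k. m (Suc k) z)"
  have "(\<integral>\<^sup>+y. gam z y \<partial>CS) = (\<integral>\<^sup>+y. (\<Sum>k. G k z y * st y) \<partial>CS)"
    unfolding gam_def by simp
  also have "\<dots> = (\<Sum>k. c k)" unfolding c_def by (rule nn_integral_suminf) simp
  finally have 1: "(\<integral>\<^sup>+y. gam z y \<partial>CS) = (\<Sum>k. c k)" .
  have "(\<Sum>k. c k) + T = (\<Sum>k. c k + m (Suc k) z)"
    unfolding T_def by (rule suminf_add) auto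
  also have "\<dots> = (\<Sum>k. m k z)" unfolding c_def by (simp add: one_step)
  also have "\<dots> = T + m 0 z"
    unfolding T_def using suminf_offset[of "\<lambda>k. m k z" 1] by simp
  finally have "(\<Sum>k. c k) + T = m1 z + T" by (simp add: m_0 add.commute)
  then have "(\<Sum>k. c k) = m1 z"
    using Tfin[of z] unfolding T_def
    by (metis add.commute ennreal_add_left_cancel infinity_ennreal_def)
  then show ?thesis using 1 by simp
qed

lemma col_le: "(\<integral>\<^sup>+z. gam z y \<partial>CS) \<le> m2 y"
proof -
  have "(\<integral>\<^sup>+z. gam z y \<partial>CS) = (\<integral>\<^sup>+z. (\<Sum>k. G k z y) \<partial>CS) * st y"
    unfolding gam_def by (simp add: nn_integral_multc)
  also have "\<dots> = (\<Sum>k. H k y) * st y"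
    unfolding H_def by (simp add: nn_integral_suminf)
  also have "\<dots> \<le> a y * st y"
    by (intro mult_right_mono Osum_le) simp
  also have "\<dots> \<le> m2 y" unfolding st_def by (rule mult_div_le)
  finally show ?thesis .
qed

lemma gam_off: "z \<notin> V \<Longrightarrow> gam z y = 0"
  by (simp add: gam_def G_off)

lemma col: "(\<integral>\<^sup>+z. gam z y \<partial>CS) = m2 y"
proof (rule eq_of_le_int[where f = "\<lambda>y. \<integral>\<^sup>+z. gam z y \<partial>CS"])
  show "\<And>y. (\<integral>\<^sup>+z. gam z y \<partial>CS) \<le> m2 y" by (rule col_le)
  have "(\<integral>\<^sup>+y. \<integral>\<^sup>+z. gam z y \<partial>CS \<partial>CS) = (\<integral>\<^sup>+z. \<integral>\<^sup>+y. gam z y \<partial>CS \<partial>CS)"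
    by (rule swapV[OF cV]) (simp add: gam_off)
  also have "\<dots> = 1" by (simp add: row m1sum)
  finally show "(\<integral>\<^sup>+y. \<integral>\<^sup>+z. gam z y \<partial>CS \<partial>CS) = (\<integral>\<^sup>+y. m2 y \<partial>CS)"
    by (simp add: m2sum)
  show "(\<integral>\<^sup>+y. m2 y \<partial>CS) \<noteq> top" by (simp add: m2sum)
qed

lemma G_supp: "G k z y \<noteq> 0 \<Longrightarrow> (z, y) \<in> S\<^sup>*"
proof (induction k arbitrary: y)
  case 0
  then show ?case by (auto simp: indicator_def split: if_splits)
next
  case (Suc k)
  have "\<exists>x. G k z x * P x y \<noteq> 0"
  proof (rule ccontr)
    assume "\<not> ?thesis"
    then have eq0: "\<And>x. G k z x * P x y = 0" by simp
    have "G (Suc k) z y = 0" by (simp only: Gc.simps eq0) simp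
    then show False using Suc.prems by blast
  qed
  then obtain x where x: "G k z x \<noteq> 0" "P x y \<noteq> 0" by auto
  have zx: "(z, x) \<in> S\<^sup>*" using Suc.IH x(1) .
  have "piw x y \<noteq> 0" using x(2) by (auto simp: P_def)
  have "\<exists>n. w n * indicator {s n} x * indicator {t n} y \<noteq> (0::ennreal)"
  proof (rule ccontr)
    assume "\<not> ?thesis"
    then have "\<And>n. w n * indicator {s n} x * indicator {t n} y = (0::ennreal)" by simp
    then have "piw x y = 0" unfolding piw_def by (simp only: suminf_zero)
    then show False using \<open>piw x y \<noteq> 0\<close> by simp
  qed
  then obtain n where n: "w n * indicator {s n} x * indicator {t n} y \<noteq> (0::ennreal)" by blast
  then have "w n \<noteq> 0" by auto
  moreover have "s n = x" using n by (cases "s n = x") auto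
  moreover have "t n = y" using n by (cases "t n = y") auto
  ultimately have "(x, y) \<in> S\<^sup>*" using wS by metis
  then show ?case using zx by simp
qed

lemma gam_supp: "gam z y \<noteq> 0 \<Longrightarrow> (z, y) \<in> S\<^sup>*"
proof -
  assume "gam z y \<noteq> 0"
  then have "(\<Sum>k. G k z y) \<noteq> 0" by (auto simp: gam_def)
  then obtain k where "G k z y \<noteq> 0"
  proof -
    assume h: "\<And>k. G k z y \<noteq> 0 \<Longrightarrow> thesis"
    show thesis
    proof (rule ccontr)
      assume "\<not> thesis"
      then have "\<And>k. G k z y = 0" using h by blast
      then have "(\<Sum>k. G k z y) = 0" by (simp only: suminf_zero)
      then show False using \<open>(\<Sum>k. G k z y) \<noteq> 0\<close> by simp
    qed
  qed
  then show ?thesis by (rule G_supp)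
qed

lemma core_result:
  "\<exists>g. (\<forall>z. (\<integral>\<^sup>+y. g z y \<partial>CS) = m1 z) \<and> (\<forall>y. (\<integral>\<^sup>+z. g z y \<partial>CS) = m2 y)
     \<and> (\<forall>z y. g z y \<noteq> 0 \<longrightarrow> (z, y) \<in> S\<^sup>*)"
  using row col gam_supp by blast

end



lemma infsum_as_nn:
  fixes f :: "'b \<Rightarrow> real"
  assumes nn: "\<And>y. 0 \<le> f y" and off: "\<And>y. y \<notin> A \<Longrightarrow> f y = 0"
    and fin: "(\<integral>\<^sup>+y. ennreal (f y) \<partial>CS) \<noteq> top"
  shows "infsum f A = enn2real (\<integral>\<^sup>+y. ennreal (f y) \<partial>CS)"
proof -
  have eqA: "(\<integral>\<^sup>+y. ennreal (f y) \<partial>CS) = (\<integral>\<^sup>+y. ennreal (f y) \<partial>count_space A)"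
    by (rule nn_int_restrictV) (simp add: off)
  have int: "integrable (count_space A) f"
    by (rule integrableI_nonneg) (use fin eqA nn in \<open>auto simp: top.not_eq_extremum\<close>)
  then have "Infinite_Set_Sum.abs_summable_on f A" by (simp add: Infinite_Set_Sum.abs_summable_on_def)
  then have "infsum f A = infsetsum f A"
    by (simp add: infsetsum_infsum)
  also have "\<dots> = enn2real (\<integral>\<^sup>+y. ennreal (f y) \<partial>count_space A)"
    by (rule infsetsum_conv_nn_integral) (use fin eqA nn in auto)
  finally show ?thesis using eqA by simp
qed

lemma L_out:
  assumes "distinct g" "g \<noteq> []"
  shows "(\<exists>i. Suc i < length g \<and> g ! i = x) \<longleftrightarrow> (x \<in> set g \<and> x \<noteq> last g)"
proof
  assume "\<exists>i. Suc i < length g \<and> g ! i = x"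
  then obtain i where i: "Suc i < length g" "g ! i = x" by blast
  have "x \<in> set g" using i by auto
  moreover have "x \<noteq> last g"
  proof
    assume "x = last g"
    then have "g ! i = g ! (length g - 1)" using i assms by (simp add: last_conv_nth)
    then have "i = length g - 1" using assms i by (simp add: nth_eq_iff_index_eq)
    then show False using i by simp
  qed
  ultimately show "x \<in> set g \<and> x \<noteq> last g" by blast
next
  assume h: "x \<in> set g \<and> x \<noteq> last g"
  then obtain j where j: "j < length g" "g ! j = x" by (auto simp: in_set_conv_nth)
  have "j \<noteq> length g - 1" using h j assms by (auto simp: last_conv_nth)
  then show "\<exists>i. Suc i < length g \<and> g ! i = x" using j by (intro exI[of _ j]) auto
qed

lemma L_in:
  assumes "distinct g" "g \<noteq> []"
  shows "(\<exists>i. Suc i < length g \<and> g ! Suc i = x) \<longleftrightarrow> (x \<in> set g \<and> x \<noteq> hd g)"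
proof
  assume "\<exists>i. Suc i < length g \<and> g ! Suc i = x"
  then obtain i where i: "Suc i < length g" "g ! Suc i = x" by blast
  have "x \<in> set g" using i by (metis nth_mem)
  moreover have "x \<noteq> hd g"
  proof
    assume "x = hd g"
    then have "g ! Suc i = g ! 0" using i assms by (simp add: hd_conv_nth)
    then have "Suc i = 0" using assms i by (simp add: nth_eq_iff_index_eq)
    then show False by simp
  qed
  ultimately show "x \<in> set g \<and> x \<noteq> hd g" by blast
next
  assume h: "x \<in> set g \<and> x \<noteq> hd g"
  then obtain j where j: "j < length g" "g ! j = x" by (auto simp: in_set_conv_nth)
  have "j \<noteq> 0" using h j assms by (metis hd_conv_nth)
  then obtain i where "j = Suc i" by (cases j) auto
  then show "\<exists>i. Suc i < length g \<and> g ! Suc i = x" using j by auto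
qed

lemma PL_out:
  assumes "distinct g"
  shows "(\<integral>\<^sup>+y. ennreal (path_flow g (x, y)) \<partial>CS)
       = (if \<exists>i. Suc i < length g \<and> g ! i = x then 1 else 0)"
proof (cases "\<exists>i. Suc i < length g \<and> g ! i = x")
  case True
  then obtain i where i: "Suc i < length g" "g ! i = x" by blast
  have "ennreal (path_flow g (x, y)) = indicator {g ! Suc i} y" for y
  proof -
    have "(\<exists>j. Suc j < length g \<and> (x, y) = (g ! j, g ! Suc j)) \<longleftrightarrow> y = g ! Suc i"
    proof
      assume "\<exists>j. Suc j < length g \<and> (x, y) = (g ! j, g ! Suc j)"
      then obtain j where j: "Suc j < length g" "x = g ! j" "y = g ! Suc j" by auto
      then have "j = i" using i assms by (simp add: nth_eq_iff_index_eq)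
      then show "y = g ! Suc i" using j by simp
    qed (use i in auto)
    then show ?thesis by (simp add: path_flow_def indicator_def)
  qed
  then show ?thesis using True by (simp add: nn_integral_indicator_singleton)
next
  case False
  then have "path_flow g (x, y) = 0" for y by (auto simp: path_flow_def)
  then show ?thesis using False by simp
qed

lemma PL_in:
  assumes "distinct g"
  shows "(\<integral>\<^sup>+y. ennreal (path_flow g (y, x)) \<partial>CS)
       = (if \<exists>i. Suc i < length g \<and> g ! Suc i = x then 1 else 0)"
proof (cases "\<exists>i. Suc i < length g \<and> g ! Suc i = x")
  case True
  then obtain i where i: "Suc i < length g" "g ! Suc i = x" by blast
  have "ennreal (path_flow g (y, x)) = indicator {g ! i} y" for y
  proof -
    have "(\<exists>j. Suc j < length g \<and> (y, x) = (g ! j, g ! Suc j)) \<longleftrightarrow> y = g ! i"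
    proof
      assume "\<exists>j. Suc j < length g \<and> (y, x) = (g ! j, g ! Suc j)"
      then obtain j where j: "Suc j < length g" "y = g ! j" "x = g ! Suc j" by auto
      then have "Suc j = Suc i" using i assms by (simp add: nth_eq_iff_index_eq)
      then show "y = g ! i" using j by simp
    qed (use i in auto)
    then show ?thesis by (simp add: path_flow_def indicator_def)
  qed
  then show ?thesis using True by (simp add: nn_integral_indicator_singleton)
next
  case False
  then have "path_flow g (y, x) = 0" for y by (auto simp: path_flow_def)
  then show ?thesis using False by simp
qed




lemma coupling_from_g:
  fixes \<mu>1 \<mu>2 :: "'a pmf" and g :: "'a \<Rightarrow> 'a \<Rightarrow> ennreal"
  assumes row: "\<And>z. (\<integral>\<^sup>+y. g z y \<partial>CS) = ennreal (pmf \<mu>1 z)"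
    and col: "\<And>y. (\<integral>\<^sup>+z. g z y \<partial>CS) = ennreal (pmf \<mu>2 y)"
  shows "\<exists>\<rho>. is_coupling \<rho> \<mu>1 \<mu>2 \<and> (\<forall>x y. pmf \<rho> (x, y) \<noteq> 0 \<longrightarrow> g x y \<noteq> 0)"
proof -
  define \<kappa> where "\<kappa> z = (if pmf \<mu>1 z = 0 then return_pmf z
      else embed_pmf (\<lambda>y. enn2real (g z y) / pmf \<mu>1 z))" for z
  have gle: "g z y \<le> ennreal (pmf \<mu>1 z)" for z y
    using point_le_int[of "g z" y] row[of z] by simp
  have gfin: "ennreal (enn2real (g z y)) = g z y" for z y
    using gle[of z y] by (simp add: ennreal_enn2real_if top.not_eq_extremum)
      (metis ennreal_less_top leD top.not_eq_extremum)
  have pk: "pmf (\<kappa> z) y = enn2real (g z y) / pmf \<mu>1 z" if nz: "pmf \<mu>1 z \<noteq> 0" for z y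
  proof -
    have pos: "0 < pmf \<mu>1 z" using nz pmf_nonneg[of \<mu>1 z] by linarith
    have e: "ennreal (enn2real (g z y') / pmf \<mu>1 z) = g z y' / ennreal (pmf \<mu>1 z)" for y'
      using divide_ennreal[of "enn2real (g z y')" "pmf \<mu>1 z"] pos gfin[of z y'] by simp
    have "(\<integral>\<^sup>+y'. ennreal (enn2real (g z y') / pmf \<mu>1 z) \<partial>CS)
        = (\<integral>\<^sup>+y'. g z y' / ennreal (pmf \<mu>1 z) \<partial>CS)" by (simp add: e)
    also have "\<dots> = ennreal (pmf \<mu>1 z) / ennreal (pmf \<mu>1 z)"
      by (simp add: nn_integral_divide row)
    also have "\<dots> = 1" using pos by (simp add: ennreal_divide_self)
    finally have prob: "(\<integral>\<^sup>+y'. ennreal (enn2real (g z y') / pmf \<mu>1 z) \<partial>CS) = 1" .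
    have "pmf (embed_pmf (\<lambda>y. enn2real (g z y) / pmf \<mu>1 z)) y = enn2real (g z y) / pmf \<mu>1 z"
      by (rule pmf_embed_pmf) (use prob pos in auto)
    then show ?thesis using nz by (simp add: \<kappa>_def)
  qed
  define \<rho> where "\<rho> = bind_pmf \<mu>1 (\<lambda>z. map_pmf (Pair z) (\<kappa> z))"
  have fst: "map_pmf fst \<rho> = \<mu>1"
    unfolding \<rho>_def by (simp add: map_bind_pmf map_pmf_comp o_def bind_return_pmf')
  have snd0: "map_pmf snd \<rho> = bind_pmf \<mu>1 \<kappa>"
    unfolding \<rho>_def by (simp add: map_bind_pmf map_pmf_comp o_def)
  have "pmf (bind_pmf \<mu>1 \<kappa>) y = pmf \<mu>2 y" for y
  proof -
    have pt: "ennreal (pmf \<mu>1 z) * ennreal (pmf (\<kappa> z) y) = g z y" for z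
    proof (cases "pmf \<mu>1 z = 0")
      case True
      then show ?thesis using gle[of z y] by simp
    next
      case False
      have "ennreal (pmf \<mu>1 z) * ennreal (pmf (\<kappa> z) y)
          = ennreal (pmf \<mu>1 z * pmf (\<kappa> z) y)"
        by (rule ennreal_mult[symmetric]) simp_all
      also have "\<dots> = ennreal (pmf \<mu>1 z * (enn2real (g z y) / pmf \<mu>1 z))"
        using False by (simp add: pk)
      also have "\<dots> = g z y" using False by (simp add: gfin)
      finally show ?thesis .
    qed
    have "ennreal (pmf (bind_pmf \<mu>1 \<kappa>) y) = (\<integral>\<^sup>+z. pmf (\<kappa> z) y \<partial>measure_pmf \<mu>1)"
      by (rule ennreal_pmf_bind)
    also have "\<dots> = (\<integral>\<^sup>+z. g z y \<partial>CS)"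
      by (simp add: nn_integral_measure_pmf pt)
    also have "\<dots> = ennreal (pmf \<mu>2 y)" by (rule col)
    finally show ?thesis by simp
  qed
  then have snd: "map_pmf snd \<rho> = \<mu>2" using snd0 by (simp add: pmf_eqI)
  have supp: "g x y \<noteq> 0" if "pmf \<rho> (x, y) \<noteq> 0" for x y
  proof -
    have "(x, y) \<in> set_pmf \<rho>" using that by (simp add: set_pmf_iff)
    then have x: "x \<in> set_pmf \<mu>1" and y: "y \<in> set_pmf (\<kappa> x)"
      unfolding \<rho>_def by auto
    then have nz: "pmf \<mu>1 x \<noteq> 0" by (simp add: set_pmf_iff)
    then have "enn2real (g x y) / pmf \<mu>1 x \<noteq> 0" using y pk[of x y] by (simp add: set_pmf_iff)
    then show ?thesis by auto
  qed
  show ?thesis using fst snd supp unfolding is_coupling_def by blast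
qed




lemma path_reach:
  assumes ne: "g \<noteq> []" and step: "\<And>i. Suc i < length g \<Longrightarrow> (g ! i, g ! Suc i) \<in> S"
  shows "(hd g, last g) \<in> S\<^sup>*"
proof -
  have "k < length g \<longrightarrow> (g ! 0, g ! k) \<in> S\<^sup>*" for k
  proof (induction k)
    case 0 then show ?case by simp
  next
    case (Suc k)
    then show ?case using step[of k] by (auto intro: rtrancl_into_rtrancl)
  qed
  then have "(g ! 0, g ! (length g - 1)) \<in> S\<^sup>*" using ne by simp
  then show ?thesis using ne by (simp add: hd_conv_nth last_conv_nth)
qed

theorem theorem3p7:
  fixes V :: "'a set" and E :: "('a \<times> 'a) set" and \<mu>1 \<mu>2 :: "'a pmf"
    and Q :: "'a \<times> 'a \<Rightarrow> real"
  assumes "countable V" and "infinite V" and "E \<subseteq> V \<times> V"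
    and "set_pmf \<mu>1 \<subseteq> V" and "set_pmf \<mu>2 \<subseteq> V"
    and "is_flow V E Q" and "finitely_decomposable V E Q" and "acyclic_flow E Q"
    and "\<forall>x\<in>V. flow_div E Q x = pmf \<mu>1 x - pmf \<mu>2 x"
  shows "\<exists>\<rho>. is_coupling \<rho> \<mu>1 \<mu>2 \<and>
           (\<forall>x y. (x, y) \<notin> (flow_support E Q)\<^sup>* \<longrightarrow> pmf \<rho> (x, y) = 0)"
proof -
  note cV = assms(1) and fl = assms(6) and dv = assms(9)
  from assms(7) obtain g q where sa: "\<And>n. self_avoiding_path V E (g n)"
    and qnn: "\<And>n. 0 \<le> q n" and sq: "summable q"
    and sm: "\<And>e. (\<lambda>n. q n * path_flow (g n) e) sums Q e"
    unfolding finitely_decomposable_def by blast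
  define S where "S = flow_support E Q"
  define w where "w n = ennreal (q n)" for n
  define s where "s n = hd (g n)" for n
  define t where "t n = last (g n)" for n
  have gne: "g n \<noteq> []" and dist: "distinct (g n)" and gV: "set (g n) \<subseteq> V"
    and gE: "\<And>i. Suc i < length (g n) \<Longrightarrow> (g n ! i, g n ! Suc i) \<in> E" for n
    using sa[of n] unfolding self_avoiding_path_def directed_path_def by auto
  have sV: "s n \<in> V" and tV: "t n \<in> V" for n
    using gV[of n] gne[of n] unfolding s_def t_def by auto
  have pf01: "0 \<le> path_flow (g n) e \<and> path_flow (g n) e \<le> 1" for n e
    by (simp add: path_flow_def)
  have Qenn: "ennreal (Q e) = (\<Sum>n. w n * ennreal (path_flow (g n) e))" for e
  proof -
    have "Q e = (\<Sum>n. q n * path_flow (g n) e)" using sm[of e] by (simp add: sums_iff)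
    then have "ennreal (Q e) = (\<Sum>n. ennreal (q n * path_flow (g n) e))"
      using sm[of e] qnn pf01 by (subst suminf_ennreal2) (auto simp: sums_iff)
    also have "\<dots> = (\<Sum>n. w n * ennreal (path_flow (g n) e))"
      unfolding w_def using qnn pf01 by (simp add: ennreal_mult)
    finally show ?thesis .
  qed
  have Wfin: "(\<Sum>n. w n) \<noteq> top"
    unfolding w_def using qnn sq by (simp add: suminf_ennreal2)
  define OUT where "OUT x = (\<Sum>n. w n * (if \<exists>i. Suc i < length (g n) \<and> g n ! i = x then 1 else 0))" for x
  define IN where "IN x = (\<Sum>n. w n * (if \<exists>i. Suc i < length (g n) \<and> g n ! Suc i = x then 1 else 0))" for x
  have out: "(\<integral>\<^sup>+y. ennreal (Q (x, y)) \<partial>CS) = OUT x" for x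
  proof -
    have "(\<integral>\<^sup>+y. ennreal (Q (x, y)) \<partial>CS) = (\<Sum>n. \<integral>\<^sup>+y. w n * ennreal (path_flow (g n) (x, y)) \<partial>CS)"
      by (simp add: Qenn nn_integral_suminf)
    also have "\<dots> = OUT x"
      unfolding OUT_def by (simp add: nn_integral_cmult PL_out dist)
    finally show ?thesis .
  qed
  have inn: "(\<integral>\<^sup>+y. ennreal (Q (y, x)) \<partial>CS) = IN x" for x
  proof -
    have "(\<integral>\<^sup>+y. ennreal (Q (y, x)) \<partial>CS) = (\<Sum>n. \<integral>\<^sup>+y. w n * ennreal (path_flow (g n) (y, x)) \<partial>CS)"
      by (simp add: Qenn nn_integral_suminf)
    also have "\<dots> = IN x"
      unfolding IN_def by (simp add: nn_integral_cmult PL_in dist)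
    finally show ?thesis .
  qed
  have OUTfin: "OUT x \<noteq> top" for x
  proof -
    have "OUT x \<le> (\<Sum>n. w n)" unfolding OUT_def by (intro suminf_le) auto
    then show ?thesis using Wfin by (metis top.extremum_unique)
  qed
  have INfin: "IN x \<noteq> top" for x
  proof -
    have "IN x \<le> (\<Sum>n. w n)" unfolding IN_def by (intro suminf_le) auto
    then show ?thesis using Wfin by (metis top.extremum_unique)
  qed
  have Qnn: "0 \<le> Q e" for e using fl unfolding is_flow_def by blast
  have Qoff: "e \<notin> E \<Longrightarrow> Q e = 0" for e using fl unfolding is_flow_def by blast
  have divx: "ennreal (pmf \<mu>1 x) + IN x = ennreal (pmf \<mu>2 x) + OUT x" if xV: "x \<in> V" for x
  proof -
    have o: "(\<Sum>\<^sub>\<infinity> y\<in>{y. (x,y) \<in> E}. Q (x,y)) = enn2real (OUT x)"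
      using infsum_as_nn[of "\<lambda>y. Q (x,y)" "{y. (x,y) \<in> E}"] Qnn Qoff out[of x] OUTfin[of x] by auto
    have i: "(\<Sum>\<^sub>\<infinity> y\<in>{y. (y,x) \<in> E}. Q (y,x)) = enn2real (IN x)"
      using infsum_as_nn[of "\<lambda>y. Q (y,x)" "{y. (y,x) \<in> E}"] Qnn Qoff inn[of x] INfin[of x] by auto
    have "enn2real (OUT x) - enn2real (IN x) = pmf \<mu>1 x - pmf \<mu>2 x"
    proof -
      have "flow_div E Q x = pmf \<mu>1 x - pmf \<mu>2 x" using dv xV by blast
      then show ?thesis unfolding flow_div_def o i .
    qed
    then have "pmf \<mu>1 x + enn2real (IN x) = pmf \<mu>2 x + enn2real (OUT x)" by linarith
    then have "ennreal (pmf \<mu>1 x + enn2real (IN x)) = ennreal (pmf \<mu>2 x + enn2real (OUT x))" by simp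
    then show ?thesis using OUTfin[of x] INfin[of x]
      by (simp add: ennreal_plus[symmetric] ennreal_enn2real_if)
  qed
  have bal: "ennreal (pmf \<mu>1 x) + (\<Sum>n. w n * indicator {t n} x)
           = ennreal (pmf \<mu>2 x) + (\<Sum>n. w n * indicator {s n} x)" for x
  proof (cases "x \<in> V")
    case False
    then have "pmf \<mu>1 x = 0" "pmf \<mu>2 x = 0" using assms(4,5)
      by (auto simp: set_pmf_iff)
    moreover have "\<And>n. w n * indicator {t n} x = 0" "\<And>n. w n * indicator {s n} x = 0"
      using False sV tV by (auto simp: indicator_def)
    ultimately show ?thesis by (simp only: suminf_zero)
  next
    case True
    have trm: "w n * (if \<exists>i. Suc i < length (g n) \<and> g n ! i = x then 1 else 0) + w n * indicator {t n} x
        = w n * (if \<exists>i. Suc i < length (g n) \<and> g n ! Suc i = x then 1 else 0) + w n * indicator {s n} x" for n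
    proof -
      have "(if \<exists>i. Suc i < length (g n) \<and> g n ! i = x then 1 else 0) + indicator {t n} x
          = (if x \<in> set (g n) then 1 else (0::ennreal))"
        using L_out[OF dist gne, of n x] last_in_set[OF gne[of n]] unfolding t_def
        by (auto simp: indicator_def)
      moreover have "(if \<exists>i. Suc i < length (g n) \<and> g n ! Suc i = x then 1 else 0) + indicator {s n} x
          = (if x \<in> set (g n) then 1 else (0::ennreal))"
        using L_in[OF dist gne, of n x] hd_in_set[OF gne[of n]] unfolding s_def
        by (auto simp: indicator_def)
      ultimately show ?thesis by (simp only: distrib_left[symmetric])
    qed
    have "OUT x + (\<Sum>n. w n * indicator {t n} x) = IN x + (\<Sum>n. w n * indicator {s n} x)"
      unfolding OUT_def IN_def by (simp add: suminf_add trm)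
    note e1 = this
    have e2: "ennreal (pmf \<mu>1 x) + IN x = ennreal (pmf \<mu>2 x) + OUT x" by (rule divx[OF True])
    have "OUT x + (ennreal (pmf \<mu>1 x) + (\<Sum>n. w n * indicator {t n} x))
        = ennreal (pmf \<mu>1 x) + (OUT x + (\<Sum>n. w n * indicator {t n} x))" by (simp only: ac_simps)
    also have "\<dots> = ennreal (pmf \<mu>1 x) + (IN x + (\<Sum>n. w n * indicator {s n} x))" by (simp only: e1)
    also have "\<dots> = (ennreal (pmf \<mu>1 x) + IN x) + (\<Sum>n. w n * indicator {s n} x)" by (simp only: ac_simps)
    also have "\<dots> = (ennreal (pmf \<mu>2 x) + OUT x) + (\<Sum>n. w n * indicator {s n} x)" by (simp only: e2)
    also have "\<dots> = OUT x + (ennreal (pmf \<mu>2 x) + (\<Sum>n. w n * indicator {s n} x))" by (simp only: ac_simps)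
    finally have "OUT x + (ennreal (pmf \<mu>1 x) + (\<Sum>n. w n * indicator {t n} x))
        = OUT x + (ennreal (pmf \<mu>2 x) + (\<Sum>n. w n * indicator {s n} x))" .
    then have "OUT x = \<infinity> \<or> ennreal (pmf \<mu>1 x) + (\<Sum>n. w n * indicator {t n} x)
        = ennreal (pmf \<mu>2 x) + (\<Sum>n. w n * indicator {s n} x)" by (simp only: ennreal_add_left_cancel)
    then show ?thesis using OUTfin[of x] by (simp only: infinity_ennreal_def) blast
  qed
  have wS: "(s n, t n) \<in> S\<^sup>*" if "w n \<noteq> 0" for n
  proof -
    have "\<not> q n \<le> 0" using that unfolding w_def by (metis ennreal_eq_0_iff)
    then have qpos: "0 < q n" by simp
    have "(g n ! i, g n ! Suc i) \<in> S" if i: "Suc i < length (g n)" for i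
    proof -
      let ?e = "(g n ! i, g n ! Suc i)"
      have "path_flow (g n) ?e = 1" using i by (auto simp: path_flow_def)
      then have "w n \<le> (\<Sum>m. w m * ennreal (path_flow (g m) ?e))"
        using sum_le_suminf[of "\<lambda>m. w m * ennreal (path_flow (g m) ?e)" "{n}"] by simp
      then have "ennreal (q n) \<le> ennreal (Q ?e)" by (simp add: Qenn w_def)
      then have "q n \<le> Q ?e" using Qnn by simp
      then have "0 < Q ?e" using qpos by simp
      then show ?thesis using gE[OF i] by (simp add: S_def flow_support_def)
    qed
    then show ?thesis unfolding s_def t_def by (rule path_reach[OF gne])
  qed
  interpret core V S "\<lambda>x. ennreal (pmf \<mu>1 x)" "\<lambda>x. ennreal (pmf \<mu>2 x)" w s t
  proof
    show "countable V" by (rule cV)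
    show "\<And>x. x \<notin> V \<Longrightarrow> ennreal (pmf \<mu>1 x) = 0" using assms(4) by (auto simp: set_pmf_iff)
    show "\<And>n. s n \<in> V" "\<And>n. t n \<in> V" by (rule sV, rule tV)
    show "(\<integral>\<^sup>+x. ennreal (pmf \<mu>1 x) \<partial>CS) = 1" "(\<integral>\<^sup>+x. ennreal (pmf \<mu>2 x) \<partial>CS) = 1"
      by (simp_all add: nn_integral_pmf)
    show "(\<Sum>n. w n) \<noteq> top" by (rule Wfin)
    show "\<And>x. ennreal (pmf \<mu>1 x) + (\<Sum>n. w n * indicator {t n} x) = ennreal (pmf \<mu>2 x) + (\<Sum>n. w n * indicator {s n} x)"
      by (rule bal)
    show "\<And>n. w n \<noteq> 0 \<Longrightarrow> (s n, t n) \<in> S\<^sup>*" by (rule wS)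
  qed
  obtain G where Grow: "\<And>z. (\<integral>\<^sup>+y. G z y \<partial>CS) = ennreal (pmf \<mu>1 z)"
    and Gcol: "\<And>y. (\<integral>\<^sup>+z. G z y \<partial>CS) = ennreal (pmf \<mu>2 y)"
    and Gs: "\<And>z y. G z y \<noteq> 0 \<Longrightarrow> (z, y) \<in> S\<^sup>*"
    using core_result by blast
  obtain \<rho> where r: "is_coupling \<rho> \<mu>1 \<mu>2" "\<And>x y. pmf \<rho> (x, y) \<noteq> 0 \<Longrightarrow> G x y \<noteq> 0"
    using coupling_from_g[of G \<mu>1 \<mu>2, OF Grow Gcol] by blast
  show ?thesis using r Gs unfolding S_def by blast
qed



end
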